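(* Let $m\neq\pm1$ be a square-free integer, $p$ a prime, $k$ a positive integer, $\alpha$ a root of $X^{p^k}-m$, $M=\mathbb{Q}(\alpha)$, $r$ the remainder of $m$ modulo $p^{k+1}$, $s:=v_p(m^p-m)-1$, and for $t\in\mathbb{N}$ let $h^{(r)}_t(X)=\frac{X^{p^k}-r^{p^t}}{X^{p^{k-t}}-r}=\sum_{i=0}^{p^t-1} r^{i}X^{p^k-(i+1)p^{k-t}}\in\mathbb{Z}[X]$. Suppose $k\leq s$. Then the following $p^k$ elements of $M$ are algebraic integers and are linearly independent over $\mathbb{Q}$: $$\alpha^j\cdot\frac{h^{(r)}_t(\alpha)}{p^t}\quad\text{for } 0\leq t\leq k-1,\ 0\leq j\leq p^{k-t}-p^{k-t-1}-1,$$ together with $$\frac{h^{(r)}_k(\alpha)}{p^k}.$$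
   Context: $v_p$ denotes the $p$-adic valuation on $\mathbb{Q}$. *)

theory Defs
  imports Complex_Main "HOL-Computational_Algebra.Computational_Algebra"
begin

definition hpoly :: "int \<Rightarrow> nat \<Rightarrow> nat \<Rightarrow> nat \<Rightarrow> int poly" where
  "hpoly r p k t = (\<Sum>i<p ^ t. monom (r ^ i) (p ^ k - (i + 1) * p ^ (k - t)))"

definition basis_index :: "nat \<Rightarrow> nat \<Rightarrow> (nat \<times> nat) set" where
  "basis_index p k = {(t, j). t < k \<and> j < p ^ (k - t) - p ^ (k - t - 1)} \<union> {(k, 0)}"

definition basis_elem :: "int \<Rightarrow> nat \<Rightarrow> nat \<Rightarrow> complex \<Rightarrow> nat \<times> nat \<Rightarrow> complex" where
  "basis_elem r p k \<alpha> tj = (case tj of (t, j) \<Rightarrow>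
     \<alpha> ^ j * poly (map_poly of_int (hpoly r p k t)) \<alpha> / of_nat (p ^ t))"

end

theory Submission
  imports Defs "Jordan_Normal_Form.Char_Poly" "Berlekamp_Zassenhaus.Factor_Bound"
begin

lemma module_algebraic_int:
  fixes \<psi> :: complex and I :: "'b set" and v :: "'b \<Rightarrow> complex" and a :: "'b \<Rightarrow> 'b \<Rightarrow> int"
  assumes fin: "finite I" and iz: "iz \<in> I" "v iz \<noteq> 0"
    and eq: "\<And>i. i \<in> I \<Longrightarrow> \<psi> * v i = (\<Sum>j\<in>I. of_int (a i j) * v j)"
  shows "algebraic_int \<psi>"
proof -
  define N where "N = card I"
  obtain g where g: "bij_betw g {0..<N} I"
    using ex_bij_betw_nat_finite[OF fin] unfolding N_def by blast
  define A :: "int mat" where "A = mat N N (\<lambda>(i,j). a (g i) (g j))"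
  define V :: "complex vec" where "V = vec N (\<lambda>i. v (g i))"
  have A: "A \<in> carrier_mat N N" unfolding A_def by simp
  have AC: "(map_mat of_int A :: complex mat) \<in> carrier_mat N N" using A by simp
  obtain i1 where i1: "i1 < N" "g i1 = iz"
    using g iz unfolding bij_betw_def by (metis atLeastLessThan_iff imageE)
  have "eigenvector (map_mat of_int A) V \<psi>"
    unfolding eigenvector_def
  proof (intro conjI)
    show "V \<in> carrier_vec (dim_row (map_mat of_int A))" using A unfolding V_def by simp
    show "V \<noteq> 0\<^sub>v (dim_row (map_mat of_int A))"
    proof
      assume "V = 0\<^sub>v (dim_row (map_mat of_int A))"
      hence "V $ i1 = 0" using i1 A by simp
      thus False using i1 iz unfolding V_def by simp
    qed
    show "map_mat of_int A *\<^sub>v V = \<psi> \<cdot>\<^sub>v V"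
    proof (rule eq_vecI)
      show "dim_vec (map_mat of_int A *\<^sub>v V) = dim_vec (\<psi> \<cdot>\<^sub>v V)" using A unfolding V_def by simp
      fix i assume "i < dim_vec (\<psi> \<cdot>\<^sub>v V)"
      hence i: "i < N" unfolding V_def by simp
      have gi: "g i \<in> I" using g i unfolding bij_betw_def by auto
      have "(map_mat of_int A *\<^sub>v V) $ i = (\<Sum>j\<in>{0..<N}. of_int (a (g i) (g j)) * v (g j))"
        using i A unfolding V_def A_def by (simp add: mult_mat_vec_def scalar_prod_def)
      also have "\<dots> = (\<Sum>j\<in>I. of_int (a (g i) j) * v j)"
        by (rule sum.reindex_bij_betw[OF g])
      also have "\<dots> = \<psi> * v (g i)" using eq[OF gi] by simp
      also have "\<dots> = (\<psi> \<cdot>\<^sub>v V) $ i" using i unfolding V_def by simp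
      finally show "(map_mat of_int A *\<^sub>v V) $ i = (\<psi> \<cdot>\<^sub>v V) $ i" .
    qed
  qed
  hence "eigenvalue (map_mat of_int A) \<psi>" unfolding eigenvalue_def by blast
  hence "poly (char_poly (map_mat of_int A)) \<psi> = 0"
    using eigenvalue_root_char_poly[OF AC] by simp
  hence "poly (map_poly of_int (char_poly A)) \<psi> = 0"
    using of_int_hom.char_poly_hom[OF A, where 'a=complex] by simp
  moreover have "lead_coeff (char_poly A) = 1" using degree_monic_char_poly[OF A] by simp
  ultimately show ?thesis unfolding algebraic_int_altdef_ipoly by blast
qed

lemma poly_reduce:
  fixes f P :: "int poly" and x :: complex
  assumes lc: "lead_coeff f = 1" and root: "poly (map_poly of_int f) x = 0"
  shows "\<exists>c. poly (map_poly of_int P) x = (\<Sum>i<degree f. of_int (c i) * x ^ i)"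
proof -
  have f0: "f \<noteq> 0" using lc by auto
  obtain q r where qr: "pseudo_divmod P f = (q, r)" by force
  from pseudo_divmod[OF f0 qr] lc
  have eq: "P = f * q + r" and dr: "r = 0 \<or> degree r < degree f" by auto
  have "poly (map_poly of_int P) x = poly (map_poly of_int r) x"
    using root by (simp add: eq hom_distribs)
  also have "\<dots> = (\<Sum>i\<le>degree (map_poly (of_int :: int \<Rightarrow> complex) r). Polynomial.coeff (map_poly of_int r) i * x ^ i)"
    by (rule poly_altdef)
  also have "\<dots> = (\<Sum>i<degree f. of_int (Polynomial.coeff r i) * x ^ i)"
  proof (rule sum.mono_neutral_cong)
    show "finite {..<degree f}" by simp
    show "finite {..degree (map_poly (of_int :: int \<Rightarrow> complex) r)}" by simp
    show "\<And>i. i\<in>{..<degree f} - {..degree (map_poly (of_int :: int \<Rightarrow> complex) r)} \<Longrightarrow> of_int (Polynomial.coeff r i) * x ^ i = 0"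
      by (auto simp: coeff_eq_0)
    show "\<And>i. i\<in>{..degree (map_poly (of_int :: int \<Rightarrow> complex) r)} - {..<degree f} \<Longrightarrow> Polynomial.coeff (map_poly of_int r) i * x ^ i = 0"
      using dr by (auto simp: coeff_map_poly)
    show "\<And>i. i \<in> {..degree (map_poly (of_int :: int \<Rightarrow> complex) r)} \<inter> {..<degree f} \<Longrightarrow>
      Polynomial.coeff (map_poly of_int r) i * x ^ i = of_int (Polynomial.coeff r i) * x ^ i"
      by (simp add: coeff_map_poly)
  qed
  finally show ?thesis by blast
qed

lemma power_reduce:
  fixes f :: "int poly" and x :: complex
  assumes lc: "lead_coeff f = 1" and root: "poly (map_poly of_int f) x = 0"
  shows "\<exists>C. \<forall>n. x ^ n = (\<Sum>i<degree f. of_int (C n i) * x ^ i)"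
proof -
  have "\<forall>n. \<exists>c. x ^ n = (\<Sum>i<degree f. of_int (c i) * x ^ i)"
  proof
    fix n
    from poly_reduce[OF lc root, of "Polynomial.monom 1 n"]
    show "\<exists>c. x ^ n = (\<Sum>i<degree f. of_int (c i) * x ^ i)" by (simp add: poly_monom)
  qed
  thus ?thesis by metis
qed

lemma monic_root_degree_pos:
  fixes f :: "int poly" and x :: complex
  assumes lc: "lead_coeff f = 1" and root: "poly (map_poly of_int f) x = 0"
  shows "degree f > 0"
proof (rule ccontr)
  assume "\<not> degree f > 0"
  hence "f = [:1:]" using lc by (metis degree_0_id gr0I)
  thus False using root by simp
qed

lemma algebraic_int_mult_complex:
  fixes x y :: complex
  assumes "algebraic_int x" "algebraic_int y"
  shows "algebraic_int (x * y)"
proof -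
  obtain f where f: "poly (map_poly of_int f) x = 0" "lead_coeff f = 1"
    using assms(1) unfolding algebraic_int_altdef_ipoly by blast
  obtain g where g: "poly (map_poly of_int g) y = 0" "lead_coeff g = 1"
    using assms(2) unfolding algebraic_int_altdef_ipoly by blast
  obtain C where C: "\<And>n. x ^ n = (\<Sum>i<degree f. of_int (C n i) * x ^ i)"
    using power_reduce[OF f(2,1)] by blast
  obtain D where D: "\<And>n. y ^ n = (\<Sum>i<degree g. of_int (D n i) * y ^ i)"
    using power_reduce[OF g(2,1)] by blast
  have a: "degree f > 0" by (rule monic_root_degree_pos[OF f(2,1)])
  have b: "degree g > 0" by (rule monic_root_degree_pos[OF g(2,1)])
  define I where "I = {..<degree f} \<times> {..<degree g}"
  show ?thesis
  proof (rule module_algebraic_int[where I = I and v = "\<lambda>(i,j). x ^ i * y ^ j" and iz = "(0,0)"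
        and a = "\<lambda>(i,j) (i',j'). C (Suc i) i' * D (Suc j) j'"])
    show "finite I" unfolding I_def by simp
    show "(0, 0) \<in> I" using a b unfolding I_def by simp
    show "(case (0, 0) of (i, j) \<Rightarrow> x ^ i * y ^ j) \<noteq> 0" by simp
    fix ij assume "ij \<in> I"
    obtain i j where ij: "ij = (i, j)" by force
    have "x * y * (x ^ i * y ^ j) = x ^ Suc i * y ^ Suc j" by (simp add: algebra_simps)
    also have "\<dots> = (\<Sum>i'<degree f. of_int (C (Suc i) i') * x ^ i') * (\<Sum>j'<degree g. of_int (D (Suc j) j') * y ^ j')"
      using C D by metis
    also have "\<dots> = (\<Sum>i'<degree f. \<Sum>j'<degree g. (of_int (C (Suc i) i') * x ^ i') * (of_int (D (Suc j) j') * y ^ j'))"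
      by (rule sum_product)
    also have "\<dots> = (\<Sum>(i',j')\<in>I. (of_int (C (Suc i) i') * x ^ i') * (of_int (D (Suc j) j') * y ^ j'))"
      unfolding I_def by (rule sum.cartesian_product)
    also have "\<dots> = (\<Sum>kl\<in>I. of_int ((case ij of (i, j) \<Rightarrow> \<lambda>(i', j'). C (Suc i) i' * D (Suc j) j') kl) * (case kl of (i, j) \<Rightarrow> x ^ i * y ^ j))"
      unfolding ij by (intro sum.cong) (auto simp: algebra_simps)
    finally show "x * y * (case ij of (i, j) \<Rightarrow> x ^ i * y ^ j) = (\<Sum>kl\<in>I. of_int ((case ij of (i, j) \<Rightarrow> \<lambda>(i', j'). C (Suc i) i' * D (Suc j) j') kl) * (case kl of (i, j) \<Rightarrow> x ^ i * y ^ j))"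
      unfolding ij by simp
  qed
qed

lemma algebraic_int_power_complex:
  fixes x :: complex
  assumes "algebraic_int x"
  shows "algebraic_int (x ^ n)"
  by (induction n) (auto intro: algebraic_int_mult_complex assms)

lemma binom_div:
  fixes p t j :: nat and D :: int
  assumes p: "prime p" and j: "1 \<le> j" "j \<le> p ^ t" and pD: "int p dvd D"
  shows "int (p ^ t) dvd int (p ^ t choose j) * D ^ (j - 1)"
proof -
  define C where "C = p ^ t choose j"
  have "j * C = p ^ t * ((p ^ t - 1) choose (j - 1))"
    unfolding C_def using j by (intro times_binomial_minus1_eq) simp
  hence d1: "p ^ t dvd C * j" by (simp add: mult.commute)
  have d2: "p ^ t dvd C * p ^ t" by simp
  have "p ^ t dvd gcd (C * j) (C * p ^ t)" using d1 d2 by simp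
  also have "gcd (C * j) (C * p ^ t) = C * gcd j (p ^ t)" by (simp add: gcd_mult_distrib_nat)
  finally have d3: "p ^ t dvd C * gcd j (p ^ t)" .
  have "gcd j (p ^ t) dvd p ^ t" by simp
  then obtain a where a: "a \<le> t" "gcd j (p ^ t) = p ^ a"
    using divides_primepow_nat[OF p] by blast
  have "p ^ a dvd j" using a(2) gcd_dvd1[of j "p ^ t"] by simp
  hence "p ^ a \<le> j" using j by (intro dvd_imp_le) auto
  moreover have "a < p ^ a"
  proof -
    have "a < 2 ^ a" by (rule less_exp)
    also have "2 ^ a \<le> p ^ a" using prime_ge_2_nat[OF p] by (intro power_mono) auto
    finally show ?thesis .
  qed
  ultimately have "a \<le> j - 1" by linarith
  hence "p ^ a dvd p ^ (j - 1)" by (rule le_imp_power_dvd)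
  hence "C * p ^ a dvd C * p ^ (j - 1)" by (rule mult_dvd_mono[OF dvd_refl])
  hence "p ^ t dvd C * p ^ (j - 1)" using d3 a(2) by (simp add: dvd_trans)
  hence "int (p ^ t) dvd int (C * p ^ (j - 1))" by (simp only: int_dvd_int_iff)
  hence "int (p ^ t) dvd int C * int p ^ (j - 1)" by simp
  moreover have "int C * int p ^ (j - 1) dvd int C * D ^ (j - 1)"
    using pD by (intro mult_dvd_mono dvd_refl dvd_power_same)
  ultimately show ?thesis unfolding C_def by (rule dvd_trans)
qed

lemma theta_int:
  fixes x :: complex and m r :: int and p t :: nat
  assumes p: "prime p" and xm: "x ^ (p ^ t) = of_int m"
    and dv: "int p ^ (t + 1) dvd m - r ^ (p ^ t)"
  shows "algebraic_int ((\<Sum>i<p ^ t. of_int r ^ i * x ^ (p ^ t - 1 - i)) / of_nat (p ^ t))"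
proof -
  define n where "n = p ^ t"
  have n0: "n > 0" unfolding n_def using prime_gt_0_nat[OF p] by simp
  obtain K where K: "m - r ^ n = int p ^ (t + 1) * K" using dv unfolding n_def by blast
  define D where "D = int p * K"
  have D: "m - r ^ n = int n * D" using K unfolding D_def n_def by (simp add: algebra_simps)
  have pD: "int p dvd D" unfolding D_def by simp
  define N where "N = (\<Sum>i<n. (of_int r :: complex) ^ i * x ^ (n - 1 - i))"
  define \<theta> where "\<theta> = N / of_nat n"
  have geo: "(of_int r :: complex) ^ n - x ^ n = (of_int r - x) * N"
    unfolding N_def using diff_power_eq_sum[of "of_int r :: complex" "n - 1" x] n0 by simp
  have zt: "(x - of_int r) * \<theta> = of_int D"
  proof -
    have "(x - of_int r) * N = of_int (m - r ^ n)"
      using geo xm unfolding n_def by (simp add: algebra_simps)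
    thus ?thesis unfolding \<theta>_def D using n0 by (simp add: field_simps)
  qed
  have goal: "algebraic_int \<theta>"
  proof (cases "x = of_int r")
    case True
    have "N = (\<Sum>i<n. (of_int r :: complex) ^ (n - 1))"
      unfolding N_def True by (intro sum.cong) (auto simp flip: power_add)
    hence "\<theta> = of_int (r ^ (n - 1))" unfolding \<theta>_def using n0 by simp
    thus ?thesis by (metis algebraic_int_of_int)
  next
    case xr: False
    show ?thesis
    proof (cases "D = 0")
      case True
      hence "\<theta> = 0" using zt xr by simp
      thus ?thesis by simp
    next
      case D0: False
      define z where "z = x - of_int r"
      have zt': "z * \<theta> = of_int D" using zt unfolding z_def .
      define E where "E = (\<lambda>i. (int (n choose i) * D ^ (n - i - 1) * r ^ i) div int n)"
      have Ediv: "of_int (E i) * of_nat n = (of_nat (n choose i) * of_int D ^ (n - i - 1) * of_int r ^ i :: complex)"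
        if "i < n" for i
      proof -
        have "int n dvd int (n choose (n - i)) * D ^ (n - i - 1)"
          using binom_div[OF p, of "n - i" t D] that pD unfolding n_def by simp
        hence "int n dvd int (n choose i) * D ^ (n - i - 1) * r ^ i"
          using binomial_symmetric[of i n] that by simp
        hence "E i * int n = int (n choose i) * D ^ (n - i - 1) * r ^ i"
          unfolding E_def by simp
        hence "(of_int (E i * int n) :: complex) = of_int (int (n choose i) * D ^ (n - i - 1) * r ^ i)"
          by simp
        thus ?thesis by simp
      qed
      have "of_int m * \<theta> ^ n = (of_int r + z) ^ n * \<theta> ^ n"
        using xm unfolding z_def n_def by simp
      also have "\<dots> = (\<Sum>k\<le>n. of_nat (n choose k) * of_int r ^ k * z ^ (n - k)) * \<theta> ^ n"
        by (simp add: binomial_ring)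
      also have "\<dots> = (\<Sum>k\<le>n. of_nat (n choose k) * of_int r ^ k * of_int D ^ (n - k) * \<theta> ^ k)"
        unfolding sum_distrib_right
      proof (intro sum.cong refl)
        fix k assume "k \<in> {..n}"
        hence "\<theta> ^ n = \<theta> ^ (n - k) * \<theta> ^ k" by (simp flip: power_add)
        thus "of_nat (n choose k) * of_int r ^ k * z ^ (n - k) * \<theta> ^ n =
          of_nat (n choose k) * of_int r ^ k * of_int D ^ (n - k) * \<theta> ^ k"
          by (simp add: zt'[symmetric] power_mult_distrib)
      qed
      also have "{..n} = insert n {..<n}" by auto
      also have "(\<Sum>k\<in>insert n {..<n}. of_nat (n choose k) * of_int r ^ k * of_int D ^ (n - k) * \<theta> ^ k)
          = of_int r ^ n * \<theta> ^ n + (\<Sum>k<n. of_nat (n choose k) * of_int r ^ k * of_int D ^ (n - k) * \<theta> ^ k)"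
        by simp
      finally have "of_int (m - r ^ n) * \<theta> ^ n = (\<Sum>k<n. of_nat (n choose k) * of_int r ^ k * of_int D ^ (n - k) * \<theta> ^ k)"
        by (simp add: algebra_simps)
      also have "\<dots> = of_int D * (\<Sum>k<n. of_nat (n choose k) * of_int D ^ (n - k - 1) * of_int r ^ k * \<theta> ^ k)"
        unfolding sum_distrib_left
      proof (intro sum.cong refl)
        fix k assume "k \<in> {..<n}"
        hence "n - k = Suc (n - k - 1)" by simp
        hence "(of_int D :: complex) ^ (n - k) = of_int D * of_int D ^ (n - k - 1)"
          by (metis power_Suc)
        thus "of_nat (n choose k) * of_int r ^ k * of_int D ^ (n - k) * \<theta> ^ k =
          of_int D * (of_nat (n choose k) * of_int D ^ (n - k - 1) * of_int r ^ k * \<theta> ^ k)"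
          by (simp add: algebra_simps)
      qed
      also have "\<dots> = of_int D * (\<Sum>k<n. of_nat n * (of_int (E k) * \<theta> ^ k))"
      proof (rule arg_cong2[where f="(*)"], rule refl, rule sum.cong, rule refl)
        fix k assume k: "k \<in> {..<n}"
        have "of_nat (n choose k) * of_int D ^ (n - k - 1) * of_int r ^ k * \<theta> ^ k = (of_int (E k) * of_nat n) * \<theta> ^ k"
          using Ediv[of k] k by simp
        also have "\<dots> = of_nat n * (of_int (E k) * \<theta> ^ k)" by (simp only: mult_ac)
        finally show "of_nat (n choose k) * of_int D ^ (n - k - 1) * of_int r ^ k * \<theta> ^ k = of_nat n * (of_int (E k) * \<theta> ^ k)" .
      qed
      finally have eq1: "of_int (m - r ^ n) * \<theta> ^ n = of_int D * (\<Sum>k<n. of_nat n * (of_int (E k) * \<theta> ^ k))" .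
      have "(of_int (m - r ^ n) :: complex) = of_int D * of_nat n" using D by simp
      hence "of_int D * of_nat n * \<theta> ^ n = of_int D * (\<Sum>k<n. of_nat n * (of_int (E k) * \<theta> ^ k))" using eq1 by simp
      also have "(\<Sum>k<n. of_nat n * (of_int (E k) * \<theta> ^ k)) = of_nat n * (\<Sum>k<n. of_int (E k) * \<theta> ^ k)"
        by (simp add: sum_distrib_left)
      finally have "(of_int D * of_nat n) * \<theta> ^ n = (of_int D * of_nat n) * (\<Sum>k<n. of_int (E k) * \<theta> ^ k)"
        by (simp only: mult.assoc)
      moreover have "(of_int D * of_nat n :: complex) \<noteq> 0" using D0 n0 by simp
      ultimately have key: "\<theta> ^ n = (\<Sum>k<n. of_int (E k) * \<theta> ^ k)" by simp
      show ?thesis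
      proof (rule module_algebraic_int[where I = "{..<n}" and v = "\<lambda>i. \<theta> ^ i" and iz = 0
            and a = "\<lambda>i i'. if Suc i < n then (if i' = Suc i then 1 else 0) else E i'"])
        show "finite {..<n}" by simp
        show "0 \<in> {..<n}" using n0 by simp
        show "\<theta> ^ 0 \<noteq> 0" by simp
        fix i assume i: "i \<in> {..<n}"
        show "\<theta> * \<theta> ^ i = (\<Sum>j\<in>{..<n}. of_int (if Suc i < n then if j = Suc i then 1 else 0 else E j) * \<theta> ^ j)"
        proof (cases "Suc i < n")
          case True
          hence "(\<Sum>j\<in>{..<n}. of_int (if Suc i < n then if j = Suc i then 1 else 0 else E j) * \<theta> ^ j)
             = (\<Sum>j\<in>{..<n}. if j = Suc i then \<theta> ^ j else 0)" by (intro sum.cong) auto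
          also have "\<dots> = \<theta> ^ Suc i" using True by simp
          finally show ?thesis by simp
        next
          case False
          hence "Suc i = n" using i by simp
          thus ?thesis using key False by (simp flip: power_Suc)
        qed
      qed
    qed
  qed
  thus ?thesis unfolding \<theta>_def N_def n_def .
qed

lemma hpoly_eval:
  fixes \<alpha> :: complex
  assumes "t \<le> k"
  shows "poly (map_poly of_int (hpoly r p k t)) \<alpha> =
    (\<Sum>i<p ^ t. of_int r ^ i * (\<alpha> ^ (p ^ (k - t))) ^ (p ^ t - 1 - i))"
proof -
  have "poly (map_poly of_int (hpoly r p k t)) \<alpha> =
     (\<Sum>i<p ^ t. of_int r ^ i * \<alpha> ^ (p ^ k - (i + 1) * p ^ (k - t)))"
    unfolding hpoly_def by (simp add: hom_distribs poly_sum poly_monom)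
  also have "\<dots> = (\<Sum>i<p ^ t. of_int r ^ i * (\<alpha> ^ (p ^ (k - t))) ^ (p ^ t - 1 - i))"
  proof (intro sum.cong refl)
    fix i assume i: "i \<in> {..<p ^ t}"
    have pk: "p ^ k = p ^ t * p ^ (k - t)" using assms by (simp flip: power_add)
    have "p ^ k - (i + 1) * p ^ (k - t) = (p ^ t - (i + 1)) * p ^ (k - t)"
      unfolding pk by (simp add: diff_mult_distrib)
    also have "\<dots> = p ^ (k - t) * (p ^ t - 1 - i)" by simp
    finally show "of_int r ^ i * \<alpha> ^ (p ^ k - (i + 1) * p ^ (k - t)) =
        of_int r ^ i * (\<alpha> ^ (p ^ (k - t))) ^ (p ^ t - 1 - i)"
      by (simp add: power_mult)
  qed
  finally show ?thesis .
qed

lemma cong_part: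
  fixes m :: int and p k t :: nat
  assumes mult: "int k \<le> int (multiplicity (int p) (m ^ p - m)) - 1" and tk: "t \<le> k"
  shows "int p ^ (t + 1) dvd m - (m mod int p ^ (k + 1)) ^ (p ^ t)"
proof -
  define Q where "Q = int p ^ (k + 1)"
  have "k + 1 \<le> multiplicity (int p) (m ^ p - m)" using mult by linarith
  hence Qd: "Q dvd m ^ p - m" unfolding Q_def by (rule multiplicity_dvd')
  hence mp: "m ^ p mod Q = m mod Q" by (simp add: mod_eq_dvd_iff)
  have pw: "m ^ (p ^ s) mod Q = m mod Q" for s
  proof (induction s)
    case 0 then show ?case by simp
  next
    case (Suc s)
    have "m ^ (p ^ Suc s) mod Q = (m ^ (p ^ s)) ^ p mod Q" by (simp only: power_Suc2 power_mult)
    also have "\<dots> = (m ^ (p ^ s) mod Q) ^ p mod Q" by (simp add: power_mod)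
    also have "\<dots> = (m mod Q) ^ p mod Q" using Suc by simp
    also have "\<dots> = m ^ p mod Q" by (simp add: power_mod)
    also have "\<dots> = m mod Q" by (rule mp)
    finally show ?case .
  qed
  have "(m mod Q) ^ (p ^ t) mod Q = m ^ (p ^ t) mod Q" by (simp add: power_mod)
  also have "\<dots> = m mod Q" by (rule pw)
  finally have "Q dvd (m mod Q) ^ (p ^ t) - m" by (simp add: mod_eq_dvd_iff)
  hence "Q dvd m - (m mod Q) ^ (p ^ t)" by (simp add: dvd_diff_commute)
  moreover have "int p ^ (t + 1) dvd Q" unfolding Q_def using tk by (intro le_imp_power_dvd) simp
  ultimately show ?thesis unfolding Q_def by (meson dvd_trans)
qed

lemma eis_aux:
  fixes f g h :: "int poly" and q :: int
  assumes q: "prime q" and fgh: "f = g * h"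
    and fq: "\<And>i. i < degree f \<Longrightarrow> q dvd Polynomial.coeff f i"
    and g0: "q dvd Polynomial.coeff g 0" and h0: "\<not> q dvd Polynomial.coeff h 0"
    and dg: "degree g < degree f" and lg: "lead_coeff g dvd 1"
  shows False
proof -
  have all: "q dvd Polynomial.coeff g i" if "i < degree f" for i
    using that
  proof (induction i rule: less_induct)
    case (less i)
    have "Polynomial.coeff f i = (\<Sum>l\<le>i. Polynomial.coeff g l * Polynomial.coeff h (i - l))"
      unfolding fgh by (rule coeff_mult)
    also have "{..i} = insert i {..<i}" by auto
    also have "(\<Sum>l\<in>insert i {..<i}. Polynomial.coeff g l * Polynomial.coeff h (i - l)) =
       Polynomial.coeff g i * Polynomial.coeff h 0 + (\<Sum>l<i. Polynomial.coeff g l * Polynomial.coeff h (i - l))"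
      by simp
    finally have eq: "Polynomial.coeff f i = Polynomial.coeff g i * Polynomial.coeff h 0 + (\<Sum>l<i. Polynomial.coeff g l * Polynomial.coeff h (i - l))" .
    have "q dvd (\<Sum>l<i. Polynomial.coeff g l * Polynomial.coeff h (i - l))"
      using less by (intro dvd_sum dvd_mult2) auto
    moreover have "q dvd Polynomial.coeff f i" using fq less by simp
    ultimately have "q dvd Polynomial.coeff g i * Polynomial.coeff h 0"
      unfolding eq using dvd_add_left_iff by blast
    thus ?case using h0 q by (simp add: prime_dvd_mult_iff)
  qed
  have "q dvd lead_coeff g" using all dg by simp
  hence "q dvd 1" using lg by (rule dvd_trans)
  thus False using q not_prime_unit by blast
qed

lemma eisenstein_xn:
  fixes m :: int and n :: nat and g h :: "int poly"
  assumes sf: "squarefree m" and m1: "m \<noteq> 1" and m2: "m \<noteq> -1" and n: "n > 0"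
    and fgh: "Polynomial.monom 1 n - [:m:] = g * h" and dg: "degree g > 0" and dh: "degree h > 0"
  shows False
proof -
  define f where "f = Polynomial.monom (1::int) n - [:m:]"
  have m0: "m \<noteq> 0" using sf by auto
  have "\<not> is_unit m" using m1 m2 by (auto simp: abs_if split: if_splits)
  then obtain q where q: "prime q" "q dvd m" using prime_divisor_exists[OF m0] by blast
  have nq2: "\<not> q ^ 2 dvd m"
  proof
    assume "q ^ 2 dvd m"
    hence "q dvd 1" using sf unfolding squarefree_def by blast
    thus False using q(1) not_prime_unit by blast
  qed
  have cf: "Polynomial.coeff f i = (if i = n then 1 else 0) - (if i = 0 then m else 0)" for i
    unfolding f_def by (simp add: coeff_monom coeff_pCons split: nat.splits)
  have degf: "degree f = n"
  proof -
    have "f = Polynomial.monom 1 n + [:-m:]" unfolding f_def by simp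
    also have "degree \<dots> = n" using n by (subst degree_add_eq_left) (auto simp: degree_monom_eq)
    finally show ?thesis .
  qed
  have fq: "q dvd Polynomial.coeff f i" if "i < degree f" for i
    using that q degf by (auto simp: cf)
  have g0: "g \<noteq> 0" and h0: "h \<noteq> 0" using dg dh by auto
  have deg: "degree g + degree h = n" using degf fgh g0 h0 unfolding f_def by (simp add: degree_mult_eq)
  have lc: "lead_coeff g * lead_coeff h = 1"
  proof -
    have "lead_coeff f = 1" using degf cf n by simp
    thus ?thesis using fgh unfolding f_def by (simp add: lead_coeff_mult)
  qed
  have c0: "Polynomial.coeff g 0 * Polynomial.coeff h 0 = - m"
  proof -
    have "Polynomial.coeff f 0 = - m" using n by (simp add: cf)
    thus ?thesis using fgh unfolding f_def by (simp add: coeff_mult_0)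
  qed
  have lg: "lead_coeff g dvd 1" using lc by (metis dvdI)
  have lh: "lead_coeff h dvd 1" using lc by (metis dvdI mult.commute)
  have "q dvd Polynomial.coeff g 0 * Polynomial.coeff h 0" using c0 q by simp
  hence "q dvd Polynomial.coeff g 0 \<or> q dvd Polynomial.coeff h 0" using q by (simp add: prime_dvd_mult_iff)
  moreover have "\<not> (q dvd Polynomial.coeff g 0 \<and> q dvd Polynomial.coeff h 0)"
  proof
    assume "q dvd Polynomial.coeff g 0 \<and> q dvd Polynomial.coeff h 0"
    hence "q * q dvd Polynomial.coeff g 0 * Polynomial.coeff h 0" by (auto intro: mult_dvd_mono)
    hence "q ^ 2 dvd m" using c0 by (simp add: power2_eq_square)
    thus False using nq2 by simp
  qed
  ultimately show False
  proof (elim disjE)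
    assume "q dvd Polynomial.coeff g 0"
    moreover have "\<not> q dvd Polynomial.coeff h 0" using calculation \<open>\<not> (q dvd _ \<and> _)\<close> by blast
    ultimately show False
      using eis_aux[OF q(1) _ fq, of g h] fgh deg dh degf lg unfolding f_def by auto
  next
    assume "q dvd Polynomial.coeff h 0"
    moreover have "\<not> q dvd Polynomial.coeff g 0" using calculation \<open>\<not> (q dvd _ \<and> _)\<close> by blast
    ultimately show False
      using eis_aux[OF q(1) _ fq, of h g] fgh deg dg degf lh unfolding f_def by (auto simp: mult.commute)
  qed
qed

lemma no_small_root:
  fixes Q :: "rat poly" and \<alpha> :: complex and m :: int and n :: nat
  assumes sf: "squarefree m" and m1: "m \<noteq> 1" and m2: "m \<noteq> -1" and n: "n > 0"
    and am: "\<alpha> ^ n = of_int m" and Q0: "Q \<noteq> 0" and dQ: "degree Q < n"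
  shows "poly (map_poly of_rat Q) \<alpha> \<noteq> 0"
proof
  assume root: "poly (map_poly of_rat Q) \<alpha> = 0"
  define f :: "int poly" where "f = Polynomial.monom 1 n - [:m:]"
  define F :: "rat poly" where "F = map_poly of_int f"
  have F_eq: "F = Polynomial.monom 1 n - [:of_int m:]" unfolding F_def f_def by (simp add: hom_distribs)
  have Froot: "poly (map_poly of_rat F) \<alpha> = 0"
  proof -
    have "map_poly (of_rat :: rat \<Rightarrow> complex) F = Polynomial.monom 1 n - [:of_int m:]"
      unfolding F_eq by (rule poly_eqI) (simp add: coeff_map_poly coeff_monom coeff_pCons of_rat_diff of_rat_minus split: nat.splits)
    thus ?thesis using am by (simp add: poly_monom)
  qed
  have degF: "degree F = n"
  proof -
    have "F = Polynomial.monom 1 n + [:- of_int m:]" unfolding F_eq by simp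
    also have "degree \<dots> = n" using n by (subst degree_add_eq_left) (auto simp: degree_monom_eq)
    finally show ?thesis .
  qed
  have F0: "F \<noteq> 0" using degF n by auto
  define G where "G = gcd Q F"
  define A where "A = fst (bezout_coefficients Q F)"
  define B where "B = snd (bezout_coefficients Q F)"
  have bez: "A * Q + B * F = G"
    unfolding G_def A_def B_def by (rule bezout_coefficients_fst_snd)
  interpret mp: map_poly_comm_ring_hom "of_rat :: rat \<Rightarrow> complex" ..
  have "poly (map_poly (of_rat :: rat \<Rightarrow> complex) G) \<alpha> = poly (map_poly of_rat (A * Q + B * F)) \<alpha>"
    using bez by simp
  also have "\<dots> = poly (map_poly of_rat A) \<alpha> * poly (map_poly of_rat Q) \<alpha> +
     poly (map_poly of_rat B) \<alpha> * poly (map_poly of_rat F) \<alpha>"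
    by (simp add: hom_distribs mp.hom_mult)
  finally have "poly (map_poly (of_rat :: rat \<Rightarrow> complex) G) \<alpha> = poly (map_poly of_rat A) \<alpha> * poly (map_poly of_rat Q) \<alpha> +
     poly (map_poly of_rat B) \<alpha> * poly (map_poly of_rat F) \<alpha>" .
  hence Groot: "poly (map_poly of_rat G) \<alpha> = 0" using root Froot by simp
  have G0: "G \<noteq> 0" unfolding G_def using Q0 by simp
  have "G dvd Q" unfolding G_def by simp
  hence dGQ: "degree G \<le> degree Q" using Q0 by (rule dvd_imp_degree_le)
  have dG: "degree G > 0"
  proof (rule ccontr)
    assume "\<not> degree G > 0"
    then obtain c where "G = [:c:]" by (metis degree_eq_zeroE gr0I)
    thus False using G0 Groot by simp
  qed
  have "G dvd F" unfolding G_def by simp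
  then obtain H where FGH: "F = G * H" by (elim dvdE)
  have H0: "H \<noteq> 0" using F0 FGH by auto
  have "degree G + degree H = n" using degF FGH G0 H0 by (simp add: degree_mult_eq)
  hence dH: "degree H > 0" using dGQ dQ by linarith
  have "map_poly rat_of_int f = G * H" using FGH unfolding F_def by simp
  from rat_to_int_factor[OF this] obtain g' h' where
    gh: "f = g' * h'" "degree g' = degree G" "degree h' = degree H" by blast
  show False
    using eisenstein_xn[OF sf m1 m2 n, of g' h'] gh dG dH unfolding f_def by simp
qed

lemma coeff_hpoly:
  "Polynomial.coeff (hpoly r p k t) e = (\<Sum>i<p ^ t. if p ^ k - (i + 1) * p ^ (k - t) = e then r ^ i else 0)"
  unfolding hpoly_def by (simp add: coeff_sum coeff_monom)

lemma hpoly_top: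
  assumes p: "prime p" and tk: "t \<le> k"
  shows "Polynomial.coeff (hpoly r p k t) (p ^ k - p ^ (k - t)) = 1"
    and "\<And>e. e > p ^ k - p ^ (k - t) \<Longrightarrow> Polynomial.coeff (hpoly r p k t) e = 0"
proof -
  define A where "A = p ^ (k - t)"
  have A1: "A \<ge> 1" unfolding A_def using prime_gt_0_nat[OF p] by simp
  have pk: "p ^ k = p ^ t * A" unfolding A_def using tk by (simp flip: power_add)
  have le: "(i + 1) * A \<le> p ^ k" if "i < p ^ t" for i
    unfolding pk using that by (intro mult_right_mono) auto
  have AP: "A \<le> p ^ k" using le[of 0] prime_gt_0_nat[OF p] by simp
  have eq0: "(p ^ k - (i + 1) * A = p ^ k - A) \<longleftrightarrow> i = 0" if "i < p ^ t" for i
  proof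
    assume "p ^ k - (i + 1) * A = p ^ k - A"
    hence "(i + 1) * A = A" using le[OF that] AP by linarith
    thus "i = 0" using A1 by simp
  qed simp
  have "Polynomial.coeff (hpoly r p k t) (p ^ k - A) = (\<Sum>i<p ^ t. if i = 0 then r ^ i else 0)"
    unfolding coeff_hpoly A_def[symmetric] by (intro sum.cong refl) (use eq0 in auto)
  also have "\<dots> = 1" using prime_gt_0_nat[OF p] by simp
  finally show "Polynomial.coeff (hpoly r p k t) (p ^ k - p ^ (k - t)) = 1" unfolding A_def .
  fix e assume e: "e > p ^ k - p ^ (k - t)"
  have "p ^ k - (i + 1) * A \<noteq> e" if "i < p ^ t" for i
  proof -
    have "p ^ k - (i + 1) * A \<le> p ^ k - A" using A1 by (intro diff_le_mono2) simp
    thus ?thesis using e unfolding A_def by linarith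
  qed
  thus "Polynomial.coeff (hpoly r p k t) e = 0"
    unfolding coeff_hpoly A_def[symmetric] by (intro sum.neutral) auto
qed

definition dd :: "nat \<Rightarrow> nat \<Rightarrow> nat \<times> nat \<Rightarrow> nat" where
  "dd p k tj = (case tj of (t, j) \<Rightarrow> p ^ k - p ^ (k - t) + j)"

lemma bi_facts:
  assumes p: "prime p" and tj: "(t, j) \<in> basis_index p k"
  shows "t \<le> k" and "dd p k (t, j) \<ge> p ^ k - p ^ (k - t)"
    and "t < k \<Longrightarrow> dd p k (t, j) < p ^ k - p ^ (k - t - 1)"
    and "dd p k (t, j) < p ^ k"
proof -
  have p1: "p \<ge> 1" using prime_gt_0_nat[OF p] by simp
  show tk: "t \<le> k" using tj unfolding basis_index_def by auto
  show "dd p k (t, j) \<ge> p ^ k - p ^ (k - t)" unfolding dd_def by simp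
  have lt: "dd p k (t, j) < p ^ k - p ^ (k - t - 1)" if tk': "t < k"
  proof -
    have j: "j < p ^ (k - t) - p ^ (k - t - 1)" using tj tk' unfolding basis_index_def by auto
    have "p ^ (k - t - 1) \<le> p ^ (k - t)" using p1 by (intro power_increasing) auto
    moreover have "p ^ (k - t) \<le> p ^ k" using p1 by (intro power_increasing) auto
    ultimately show ?thesis using j unfolding dd_def by (simp del: diff_add_assoc2 add_diff_assoc2) linarith
  qed
  thus "t < k \<Longrightarrow> dd p k (t, j) < p ^ k - p ^ (k - t - 1)" .
  show "dd p k (t, j) < p ^ k"
  proof (cases "t < k")
    case True
    have "p ^ (k - t - 1) \<ge> 1" using p1 by simp
    thus ?thesis using lt[OF True] by linarith
  next
    case False
    hence "t = k" "j = 0" using tj tk unfolding basis_index_def by auto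
    thus ?thesis unfolding dd_def using p1 by simp
  qed
qed

lemma bi_inj:
  assumes p: "prime p"
  shows "inj_on (dd p k) (basis_index p k)"
proof -
  have p1: "p \<ge> 1" using prime_gt_0_nat[OF p] by simp
  have noless: "dd p k (t1, j1) \<noteq> dd p k (t2, j2)"
    if a: "(t1, j1) \<in> basis_index p k" "(t2, j2) \<in> basis_index p k" "t1 < t2" for t1 j1 t2 j2
  proof -
    have "t2 \<le> k" using bi_facts[OF p a(2)] by simp
    hence t1k: "t1 < k" using a(3) by simp
    have "p ^ (k - t2) \<le> p ^ (k - t1 - 1)" using p1 a(3) by (intro power_increasing) auto
    hence "p ^ k - p ^ (k - t1 - 1) \<le> p ^ k - p ^ (k - t2)" by simp
    thus ?thesis using bi_facts(3)[OF p a(1) t1k] bi_facts(2)[OF p a(2)] by linarith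
  qed
  show ?thesis
  proof (rule inj_onI)
    fix x y assume x: "x \<in> basis_index p k" and y: "y \<in> basis_index p k" and eq: "dd p k x = dd p k y"
    obtain t1 j1 where x': "x = (t1, j1)" by force
    obtain t2 j2 where y': "y = (t2, j2)" by force
    have "\<not> t1 < t2" using noless[of t1 j1 t2 j2] x y eq x' y' by auto
    moreover have "\<not> t2 < t1" using noless[of t2 j2 t1 j1] x y eq x' y' by auto
    ultimately have "t1 = t2" by simp
    thus "x = y" using eq x' y' unfolding dd_def by simp
  qed
qed

definition bpoly :: "int \<Rightarrow> nat \<Rightarrow> nat \<Rightarrow> nat \<times> nat \<Rightarrow> rat poly" where
  "bpoly r p k tj = (case tj of (t, j) \<Rightarrow>
     Polynomial.smult (1 / of_nat (p ^ t)) (Polynomial.monom 1 j * map_poly of_int (hpoly r p k t)))"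

lemma coeff_bpoly:
  "Polynomial.coeff (bpoly r p k (t, j)) e =
     1 / of_nat (p ^ t) * (if e < j then 0 else of_int (Polynomial.coeff (hpoly r p k t) (e - j)))"
  unfolding bpoly_def by (simp add: coeff_monom_mult coeff_map_poly)

lemma bpoly_eval:
  "poly (map_poly (of_rat :: rat \<Rightarrow> complex) (bpoly r p k (t, j))) \<alpha> = basis_elem r p k \<alpha> (t, j)"
proof -
  have "map_poly (of_rat :: rat \<Rightarrow> complex) (bpoly r p k (t, j)) =
     Polynomial.smult (1 / of_nat (p ^ t)) (Polynomial.monom 1 j * map_poly of_int (hpoly r p k t))"
    by (rule poly_eqI) (simp add: coeff_bpoly coeff_map_poly coeff_monom_mult of_rat_mult of_rat_divide of_rat_power)
  thus ?thesis unfolding basis_elem_def by (simp add: poly_monom)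
qed

lemma bpoly_top:
  assumes p: "prime p" and tj: "(t, j) \<in> basis_index p k"
  shows "Polynomial.coeff (bpoly r p k (t, j)) (dd p k (t, j)) = 1 / of_nat (p ^ t)"
    and "\<And>e. e > dd p k (t, j) \<Longrightarrow> Polynomial.coeff (bpoly r p k (t, j)) e = 0"
proof -
  have tk: "t \<le> k" by (rule bi_facts(1)[OF p tj])
  show "Polynomial.coeff (bpoly r p k (t, j)) (dd p k (t, j)) = 1 / of_nat (p ^ t)"
    unfolding coeff_bpoly dd_def using hpoly_top(1)[OF p tk, of r] by simp
  fix e assume e: "e > dd p k (t, j)"
  hence "e - j > p ^ k - p ^ (k - t)" "\<not> e < j" unfolding dd_def by auto
  thus "Polynomial.coeff (bpoly r p k (t, j)) e = 0"
    unfolding coeff_bpoly using hpoly_top(2)[OF p tk, of "e - j" r] by simp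
qed

lemma lin_indep:
  fixes m :: int and p k :: nat and \<alpha> :: complex and c :: "nat \<times> nat \<Rightarrow> rat" and r :: int
  assumes sf: "squarefree m" and m1: "m \<noteq> 1" and m2: "m \<noteq> -1" and p: "prime p"
    and am: "\<alpha> ^ (p ^ k) = of_int m"
    and sum0: "(\<Sum>i \<in> basis_index p k. of_rat (c i) * basis_elem r p k \<alpha> i) = 0"
  shows "\<forall>i \<in> basis_index p k. c i = 0"
proof (rule ccontr)
  assume neg: "\<not> (\<forall>i \<in> basis_index p k. c i = 0)"
  define BI where "BI = basis_index p k"
  have pk: "p ^ k > 0" using prime_gt_0_nat[OF p] by simp
  have finBI: "finite BI"
  proof (rule finite_subset)
    show "BI \<subseteq> {..k} \<times> {..<p ^ k}"
    proof
      fix x assume x: "x \<in> BI"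
      obtain t j where tj: "x = (t, j)" by force
      have "t \<le> k" using bi_facts(1)[OF p] x tj unfolding BI_def by simp
      moreover have "j < p ^ k" using bi_facts(4)[OF p] x tj unfolding BI_def dd_def by fastforce
      ultimately show "x \<in> {..k} \<times> {..<p ^ k}" using tj by simp
    qed
  qed simp
  define S where "S = {i \<in> BI. c i \<noteq> 0}"
  have S0: "S \<noteq> {}" using neg unfolding S_def BI_def by auto
  have finS: "finite S" using finBI unfolding S_def by simp
  define M where "M = Max (dd p k ` S)"
  have "M \<in> dd p k ` S" unfolding M_def using finS S0 by simp
  then obtain ix where isS: "ix \<in> S" and dis: "dd p k ix = M" by blast
  have Mmax: "dd p k i \<le> M" if "i \<in> S" for i unfolding M_def using finS that by simp
  obtain ts js where is_eq: "ix = (ts, js)" by force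
  have isBI: "ix \<in> BI" using isS unfolding S_def by simp
  define Qp where "Qp = (\<Sum>i\<in>BI. Polynomial.smult (c i) (bpoly r p k i))"
  have coeffQ: "Polynomial.coeff Qp e = (\<Sum>i\<in>BI. c i * Polynomial.coeff (bpoly r p k i) e)" for e
    unfolding Qp_def by (simp add: coeff_sum)
  have zero_above: "Polynomial.coeff (bpoly r p k i) e = 0" if "i \<in> BI" "e > dd p k i" for i e
  proof -
    obtain t j where "i = (t, j)" by force
    thus ?thesis using bpoly_top(2)[OF p] that unfolding BI_def by auto
  qed
  have dlt: "dd p k i < p ^ k" if "i \<in> BI" for i
  proof -
    obtain t j where "i = (t, j)" by force
    thus ?thesis using bi_facts(4)[OF p] that unfolding BI_def by auto
  qed
  have degQ: "degree Qp < p ^ k"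
  proof -
    have "degree Qp \<le> p ^ k - 1"
    proof (rule degree_le, intro allI impI)
      fix e assume e: "e > p ^ k - 1"
      have "Polynomial.coeff (bpoly r p k i) e = 0" if "i \<in> BI" for i
      proof -
        have "dd p k i < e" using dlt[OF that] e by linarith
        thus ?thesis by (rule zero_above[OF that])
      qed
      thus "Polynomial.coeff Qp e = 0" unfolding coeffQ by simp
    qed
    thus ?thesis using pk by linarith
  qed
  interpret mp: map_poly_comm_ring_hom "of_rat :: rat \<Rightarrow> complex" ..
  have "poly (map_poly (of_rat :: rat \<Rightarrow> complex) Qp) \<alpha> =
      (\<Sum>i\<in>BI. of_rat (c i) * poly (map_poly of_rat (bpoly r p k i)) \<alpha>)"
    unfolding Qp_def by (simp add: hom_distribs poly_sum)
  also have "\<dots> = (\<Sum>i\<in>BI. of_rat (c i) * basis_elem r p k \<alpha> i)"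
  proof (intro sum.cong refl)
    fix i assume "i \<in> BI"
    obtain t j where "i = (t, j)" by force
    thus "of_rat (c i) * poly (map_poly of_rat (bpoly r p k i)) \<alpha> = of_rat (c i) * basis_elem r p k \<alpha> i"
      by (simp add: bpoly_eval)
  qed
  also have "\<dots> = 0" using sum0 unfolding BI_def .
  finally have "poly (map_poly (of_rat :: rat \<Rightarrow> complex) Qp) \<alpha> = 0" .
  hence Q0: "Qp = 0" using no_small_root[OF sf m1 m2 pk am _ degQ] by blast
  have "Polynomial.coeff Qp M = (\<Sum>i\<in>BI. c i * Polynomial.coeff (bpoly r p k i) M)" by (rule coeffQ)
  also have "\<dots> = c ix * Polynomial.coeff (bpoly r p k ix) M + (\<Sum>i\<in>BI - {ix}. c i * Polynomial.coeff (bpoly r p k i) M)"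
    using finBI isBI by (rule sum.remove)
  also have "(\<Sum>i\<in>BI - {ix}. c i * Polynomial.coeff (bpoly r p k i) M) = 0"
  proof (rule sum.neutral, rule ballI)
    fix i assume i: "i \<in> BI - {ix}"
    show "c i * Polynomial.coeff (bpoly r p k i) M = 0"
    proof (cases "c i = 0")
      case False
      hence iS: "i \<in> S" using i unfolding S_def by simp
      have "dd p k i \<noteq> M"
      proof
        assume "dd p k i = M"
        hence "dd p k i = dd p k ix" using dis by simp
        hence "i = ix" using bi_inj[OF p, of k] i isBI unfolding BI_def inj_on_def by blast
        thus False using i by simp
      qed
      hence "dd p k i < M" using Mmax[OF iS] by simp
      thus ?thesis using zero_above i by simp
    qed simp
  qed
  also have "Polynomial.coeff (bpoly r p k ix) M = 1 / of_nat (p ^ ts)"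
    using bpoly_top(1)[OF p, of ts js k r] isBI dis unfolding is_eq BI_def by simp
  finally have "Polynomial.coeff Qp M = c ix * (1 / of_nat (p ^ ts))" by simp
  moreover have "c ix \<noteq> 0" using isS unfolding S_def by simp
  moreover have "(of_nat (p ^ ts) :: rat) \<noteq> 0" using prime_gt_0_nat[OF p] by simp
  ultimately have "Polynomial.coeff Qp M \<noteq> 0" by simp
  thus False using Q0 by simp
qed

theorem corollary3p3:
  fixes m :: int and p k :: nat and \<alpha> :: complex
  assumes "squarefree m" and "m \<noteq> 1" and "m \<noteq> -1"
    and "prime p" and "k > 0"
    and "\<alpha> ^ (p ^ k) = of_int m"
    and "int k \<le> int (multiplicity (int p) (m ^ p - m)) - 1"
  shows "(\<forall>i \<in> basis_index p k. algebraic_int (basis_elem (m mod int p ^ (k + 1)) p k \<alpha> i))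
    \<and> (\<forall>c :: nat \<times> nat \<Rightarrow> rat.
         (\<Sum>i \<in> basis_index p k. of_rat (c i) * basis_elem (m mod int p ^ (k + 1)) p k \<alpha> i) = 0
         \<longrightarrow> (\<forall>i \<in> basis_index p k. c i = 0))"
proof (intro conjI allI impI ballI)
  note sf = assms(1) and m1 = assms(2) and m2 = assms(3) and p = assms(4) and am = assms(6)
    and mult = assms(7)
  define r where "r = m mod int p ^ (k + 1)"
  have pk: "p ^ k > 0" using prime_gt_0_nat[OF p] by simp
  have aint: "algebraic_int \<alpha>"
  proof (rule algebraic_int_root[where p = "Polynomial.monom 1 (p ^ k)" and y = "of_int m"])
    show "algebraic_int (of_int m :: complex)" by simp
    show "poly (Polynomial.monom 1 (p ^ k)) \<alpha> = of_int m" using am by (simp add: poly_monom)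
    show "\<forall>i. Polynomial.coeff (Polynomial.monom 1 (p ^ k)) i \<in> \<int>" by (simp add: coeff_monom)
    show "lead_coeff (Polynomial.monom (1::complex) (p ^ k)) = 1" by (simp add: degree_monom_eq)
    show "degree (Polynomial.monom (1::complex) (p ^ k)) > 0" using pk by (simp add: degree_monom_eq)
  qed
  {
    fix i assume i: "i \<in> basis_index p k"
    obtain t j where tj: "i = (t, j)" by force
    have tk: "t \<le> k" using bi_facts(1)[OF p] i tj by simp
    define x where "x = \<alpha> ^ (p ^ (k - t))"
    have xm: "x ^ (p ^ t) = of_int m"
    proof -
      have "x ^ (p ^ t) = \<alpha> ^ (p ^ (k - t) * p ^ t)" unfolding x_def by (simp add: power_mult)
      also have "p ^ (k - t) * p ^ t = p ^ k" using tk by (simp flip: power_add)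
      finally show ?thesis using am by simp
    qed
    have th: "algebraic_int ((\<Sum>i<p ^ t. of_int r ^ i * x ^ (p ^ t - 1 - i)) / of_nat (p ^ t))"
      by (rule theta_int[OF p xm]) (unfold r_def, rule cong_part[OF mult tk])
    have "basis_elem r p k \<alpha> i = \<alpha> ^ j * ((\<Sum>i<p ^ t. of_int r ^ i * x ^ (p ^ t - 1 - i)) / of_nat (p ^ t))"
      unfolding tj basis_elem_def x_def using hpoly_eval[OF tk, of r p \<alpha>] by simp
    moreover have "algebraic_int (\<alpha> ^ j * ((\<Sum>i<p ^ t. of_int r ^ i * x ^ (p ^ t - 1 - i)) / of_nat (p ^ t)))"
      by (intro algebraic_int_mult_complex algebraic_int_power_complex aint th)
    ultimately show "algebraic_int (basis_elem (m mod int p ^ (k + 1)) p k \<alpha> i)"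
      unfolding r_def by simp
  }
  fix c :: "nat \<times> nat \<Rightarrow> rat" and i
  assume "(\<Sum>i \<in> basis_index p k. of_rat (c i) * basis_elem (m mod int p ^ (k + 1)) p k \<alpha> i) = 0"
    and "i \<in> basis_index p k"
  thus "c i = 0" using lin_indep[OF sf m1 m2 p am] by blast
qed

end
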